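(* Fix an attacker label $A\in\mathcal{L}$. For all labels $pc\in\mathcal{L}$, all initial configurations $c_1=\langle\Sigma_1,e_1\rangle$, $c_2=\langle\Sigma_2,e_2\rangle$ of $\lambda^{dFG}$, all environments $\theta_1,\theta_2$ and all final configurations $c_1',c_2'$: if $c_1\Downarrow^{\theta_1}_{pc} c_1'$, $c_2\Downarrow^{\theta_2}_{pc} c_2'$, $\theta_1\approx_A\theta_2$ and $c_1\approx_A c_2$, then $c_1'\approx_A c_2'$.
   Context: Fix a lattice $(\mathcal{L},\sqsubseteq,\sqcup)$ of security labels. The fine-grained calculus $\lambda^{dFG}$ has types $\tau::=\mathbf{unit}\mid\tau_1\to\tau_2\mid\tau_1+\tau_2\mid\tau_1\times\tau_2\mid\mathcal{L}\mid\mathbf{Ref}\,\tau$ (with a standard simple type system), expressions $e::=x\mid\lambda x.e\mid e_1\,e_2\mid()\mid\ell\mid(e_1,e_2)\mid\mathbf{fst}(e)\mid\mathbf{snd}(e)\mid\mathbf{inl}(e)\mid\mathbf{inr}(e)\mid\mathbf{case}(e,x.e_1,x.e_2)\mid\mathbf{getLabel}\mid\mathbf{labelOf}(e)\mid e_1\sqsubseteq^{?}e_2\mid\mathbf{taint}(e_1,e_2)\mid\mathbf{new}(e)\mid\,!e\mid e_1:=e_2\mid\mathbf{labelOfRef}(e)$, raw values $r::=()\mid(x.e,\theta)\mid\mathbf{inl}(v)\mid\mathbf{inr}(v)\mid(v_1,v_2)\mid\ell\mid n_\ell$ ($n\in\mathbb{N}$, $\ell\in\mathcal{L}$), values $v::=r^{\ell}$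 (raw value tagged by a label), and environments $\theta$ = finite maps from variables to values. For $v=r^{\ell}$ write $v\sqcup\ell'$ for $r^{\ell\sqcup\ell'}$. A memory is a finite list $M$ of raw values with length $|M|$, entries $M[n]$ ($n\ge 0$), and $M[n\mapsto r]$ the list with entry $n$ replaced by $r$ (or $r$ appended if $n=|M|$). A store $\Sigma$ assigns a memory $\Sigma(\ell)$ to every label $\ell$; $\Sigma[\ell\mapsto M]$ is the updated store. Evaluation $\langle\Sigma,e\rangle\Downarrow^{\theta}_{pc}\langle\Sigma',v\rangle$ is the least relation closed under the following rules; below "$e\Downarrow v$" means evaluation in the current $\theta$ and $pc$ unless said otherwise, the store is threaded through premises from left to right, the resulting store is that of the last premise, and rules without premises leave the store unchanged. (Var) $x\Downarrow\theta(x)\sqcup pc$. (Unit) $()\Downarrow()^{pc}$. (Label) $\ell\Downarrow\ell^{pc}$. (Fun) $\lambda x.e\Downarrow(x.e,\theta)^{pc}$. (GetLabel) $\mathbf{getLabel}\Downarrow pc^{pc}$. (App) if $e_1\Downarrow(x.e,\theta')^{\ell}$, $e_2\Downarrow v_2$, and $e$ evaluates to $v$ in environment $\theta'[x\mapsto v_2]$ with program counter $pc\sqcup\ell$, then $e_1\,e_2\Downarrow v$. (Inl/Inr) if $e\Downarrow v$ then $\mathbf{inl}(e)\Downarrow\mathbf{inl}(v)^{pc}$, $\mathbf{inr}(e)\Downarrow\mathbf{inr}(v)^{pc}$. (Case) if $e\Downarrow\mathbf{inl}(v_1)^{\ell}$ and $e_1$ evaluates to $v$ in $\theta[x\mapsto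 v_1]$ with program counter $pc\sqcup\ell$ then $\mathbf{case}(e,x.e_1,x.e_2)\Downarrow v$; symmetrically with $\mathbf{inr}(v_2)^{\ell}$ and $e_2$. (Pair) if $e_1\Downarrow v_1$, $e_2\Downarrow v_2$ then $(e_1,e_2)\Downarrow(v_1,v_2)^{pc}$. (Fst/Snd) if $e\Downarrow(v_1,v_2)^{\ell}$ then $\mathbf{fst}(e)\Downarrow v_1\sqcup\ell$ and $\mathbf{snd}(e)\Downarrow v_2\sqcup\ell$. (LabelOf) if $e\Downarrow r^{\ell}$ then $\mathbf{labelOf}(e)\Downarrow\ell^{\ell}$. (Compare) if $e_1\Downarrow\ell_1^{\ell_1'}$ and $e_2\Downarrow\ell_2^{\ell_2'}$ then $e_1\sqsubseteq^{?}e_2\Downarrow\mathbf{inl}(()^{pc})^{\ell_1'\sqcup\ell_2'}$ if $\ell_1\sqsubseteq\ell_2$, and $\Downarrow\mathbf{inr}(()^{pc})^{\ell_1'\sqcup\ell_2'}$ otherwise. (Taint) if $e_1\Downarrow\ell^{\ell'}$ with $\ell'\sqsubseteq\ell$, and $e_2$ evaluates to $v$ with program counter $\ell$, then $\mathbf{taint}(e_1,e_2)\Downarrow v$. (New) if $e\Downarrow r^{\ell}$ with resulting store $\Sigma'$ and $n=|\Sigma'(\ell)|$, then $\mathbf{new}(e)\Downarrow(n_\ell)^{pc}$ with final store $\Sigma'[\ell\mapsto\Sigma'(\ell)[n\mapsto r]]$. (Read) if $e\Downarrow(n_\ell)^{\ell'}$ with resulting store $\Sigma'$ and $\Sigma'(\ell)[n]=r$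 then $!e\Downarrow r^{\ell\sqcup\ell'}$. (Write) if $e_1\Downarrow(n_\ell)^{\ell_1}$ with $\ell_1\sqsubseteq\ell$ and $e_2\Downarrow r^{\ell_2}$ with resulting store $\Sigma''$ and $\ell_2\sqsubseteq\ell$, then $e_1:=e_2\Downarrow()^{pc}$ with final store $\Sigma''[\ell\mapsto\Sigma''(\ell)[n\mapsto r]]$. (LabelOfRef) if $e\Downarrow(n_\ell)^{\ell'}$ then $\mathbf{labelOfRef}(e)\Downarrow\ell^{\ell\sqcup\ell'}$. Initial configurations are $\langle\Sigma,e\rangle$, final ones $\langle\Sigma,v\rangle$; $c\Downarrow^{\theta}_{pc}c'$ denotes the evaluation relation. $A$-equivalence ($\approx_A$), defined mutually on values and raw values: $r_1^{\ell}\approx_A r_2^{\ell}$ if $\ell\sqsubseteq A$ and $r_1\approx_A r_2$; $r_1^{\ell_1}\approx_A r_2^{\ell_2}$ whenever $\ell_1\not\sqsubseteq A$ and $\ell_2\not\sqsubseteq A$; $()\approx_A()$; $\ell\approx_A\ell$; $(x.e_1,\theta_1)\approx_A(x.e_2,\theta_2)$ if $e_1,e_2$ are $\alpha$-equivalent and $\theta_1\approx_A\theta_2$; $\mathbf{inl}(v_1)\approx_A\mathbf{inl}(v_2)$ and $\mathbf{inr}(v_1)\approx_A\mathbf{inr}(v_2)$ if $v_1\approx_A v_2$; $(v_1,v_2)\approx_A(v_1',v_2')$ if $v_1\approx_A v_1'$ and $v_2\approx_A v_2'$; $n_\ell\approx_A n_\ell$ if $\ell\sqsubseteq A$; $(n_1)_{\ell_1}\approx_A(n_2)_{\ell_2}$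 if $\ell_1,\ell_2\not\sqsubseteq A$. Environments: $\theta_1\approx_A\theta_2$ iff same domain and pointwise related. Memories $M_1,M_2$ stored at label $\ell$: always related if $\ell\not\sqsubseteq A$; if $\ell\sqsubseteq A$, related iff $|M_1|=|M_2|$ and $M_1[n]\approx_A M_2[n]$ for all $n$. Stores: $\Sigma_1\approx_A\Sigma_2$ iff $\Sigma_1(\ell)\approx_A\Sigma_2(\ell)$ for all $\ell$. Initial configurations: $\langle\Sigma_1,e_1\rangle\approx_A\langle\Sigma_2,e_2\rangle$ iff $\Sigma_1\approx_A\Sigma_2$ and $e_1,e_2$ are $\alpha$-equivalent; final configurations: $\langle\Sigma_1,v_1\rangle\approx_A\langle\Sigma_2,v_2\rangle$ iff $\Sigma_1\approx_A\Sigma_2$ and $v_1\approx_A v_2$. *)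

theory Defs
  imports Main
begin

text \<open>Variables are represented by de Bruijn indices, so alpha-equivalence of expressions is
  syntactic equality; environments are lists of values (index i is looked up as theta ! i).\<close>

datatype 'l expr =
    Var nat
  | Lam "'l expr"                       (* lambda x. e, body under one binder *)
  | App "'l expr" "'l expr"
  | UnitE
  | LabE 'l
  | PairE "'l expr" "'l expr"
  | Fst "'l expr"
  | Snd "'l expr"
  | InlE "'l expr"
  | InrE "'l expr"
  | Case "'l expr" "'l expr" "'l expr"  (* case(e, x.e1, x.e2); e1,e2 under one binder *)
  | GetLabel
  | LabelOf "'l expr"
  | Cmp "'l expr" "'l expr"
  | Taint "'l expr" "'l expr"
  | New "'l expr"
  | Read "'l expr"
  | Write "'l expr" "'l expr"
  | LabelOfRef "'l expr"

datatype 'l raw =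
    RUnit
  | RClo "'l expr" "'l val list"
  | RInl "'l val"
  | RInr "'l val"
  | RPair "'l val" "'l val"
  | RLab 'l
  | RRef nat 'l
and 'l val = V "'l raw" 'l

type_synonym 'l env = "'l val list"
type_synonym 'l mem = "'l raw list"
type_synonym 'l store = "'l \<Rightarrow> 'l mem"

fun join_val :: "'l::lattice val \<Rightarrow> 'l \<Rightarrow> 'l val" where
  "join_val (V r l) l' = V r (sup l l')"

definition mem_upd :: "'l mem \<Rightarrow> nat \<Rightarrow> 'l raw \<Rightarrow> 'l mem" where
  "mem_upd M n r = (if n < length M then M[n := r] else M @ [r])"

text \<open>eval S theta pc e S' v  means  <S,e> \<Down>^theta_pc <S',v>.\<close>
inductive eval :: "'l::lattice store \<Rightarrow> 'l env \<Rightarrow> 'l \<Rightarrow> 'l expr \<Rightarrow> 'l store \<Rightarrow> 'l val \<Rightarrow> bool" where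
  EVar: "x < length \<theta> \<Longrightarrow> eval S \<theta> pc (Var x) S (join_val (\<theta> ! x) pc)"
| EUnit: "eval S \<theta> pc UnitE S (V RUnit pc)"
| ELab: "eval S \<theta> pc (LabE l) S (V (RLab l) pc)"
| EFun: "eval S \<theta> pc (Lam e) S (V (RClo e \<theta>) pc)"
| EGetLabel: "eval S \<theta> pc GetLabel S (V (RLab pc) pc)"
| EApp: "\<lbrakk> eval S \<theta> pc e1 S1 (V (RClo e \<theta>') l);
           eval S1 \<theta> pc e2 S2 v2;
           eval S2 (v2 # \<theta>') (sup pc l) e S3 v \<rbrakk>
        \<Longrightarrow> eval S \<theta> pc (App e1 e2) S3 v"
| EInl: "eval S \<theta> pc e S1 v \<Longrightarrow> eval S \<theta> pc (InlE e) S1 (V (RInl v) pc)"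
| EInr: "eval S \<theta> pc e S1 v \<Longrightarrow> eval S \<theta> pc (InrE e) S1 (V (RInr v) pc)"
| ECaseL: "\<lbrakk> eval S \<theta> pc e S1 (V (RInl v1) l);
             eval S1 (v1 # \<theta>) (sup pc l) e1 S2 v \<rbrakk>
          \<Longrightarrow> eval S \<theta> pc (Case e e1 e2) S2 v"
| ECaseR: "\<lbrakk> eval S \<theta> pc e S1 (V (RInr v2) l);
             eval S1 (v2 # \<theta>) (sup pc l) e2 S2 v \<rbrakk>
          \<Longrightarrow> eval S \<theta> pc (Case e e1 e2) S2 v"
| EPair: "\<lbrakk> eval S \<theta> pc e1 S1 v1; eval S1 \<theta> pc e2 S2 v2 \<rbrakk>
          \<Longrightarrow> eval S \<theta> pc (PairE e1 e2) S2 (V (RPair v1 v2) pc)"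
| EFst: "eval S \<theta> pc e S1 (V (RPair v1 v2) l) \<Longrightarrow> eval S \<theta> pc (Fst e) S1 (join_val v1 l)"
| ESnd: "eval S \<theta> pc e S1 (V (RPair v1 v2) l) \<Longrightarrow> eval S \<theta> pc (Snd e) S1 (join_val v2 l)"
| ELabelOf: "eval S \<theta> pc e S1 (V r l) \<Longrightarrow> eval S \<theta> pc (LabelOf e) S1 (V (RLab l) l)"
| ECmpT: "\<lbrakk> eval S \<theta> pc e1 S1 (V (RLab l1) l1'); eval S1 \<theta> pc e2 S2 (V (RLab l2) l2');
            l1 \<le> l2 \<rbrakk>
          \<Longrightarrow> eval S \<theta> pc (Cmp e1 e2) S2 (V (RInl (V RUnit pc)) (sup l1' l2'))"
| ECmpF: "\<lbrakk> eval S \<theta> pc e1 S1 (V (RLab l1) l1'); eval S1 \<theta> pc e2 S2 (V (RLab l2) l2');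
            \<not> l1 \<le> l2 \<rbrakk>
          \<Longrightarrow> eval S \<theta> pc (Cmp e1 e2) S2 (V (RInr (V RUnit pc)) (sup l1' l2'))"
| ETaint: "\<lbrakk> eval S \<theta> pc e1 S1 (V (RLab l) l'); l' \<le> l; eval S1 \<theta> l e2 S2 v \<rbrakk>
          \<Longrightarrow> eval S \<theta> pc (Taint e1 e2) S2 v"
| ENew: "\<lbrakk> eval S \<theta> pc e S1 (V r l); n = length (S1 l) \<rbrakk>
          \<Longrightarrow> eval S \<theta> pc (New e) (S1(l := mem_upd (S1 l) n r)) (V (RRef n l) pc)"
| ERead: "\<lbrakk> eval S \<theta> pc e S1 (V (RRef n l) l'); n < length (S1 l); S1 l ! n = r \<rbrakk>
          \<Longrightarrow> eval S \<theta> pc (Read e) S1 (V r (sup l l'))"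
| EWrite: "\<lbrakk> eval S \<theta> pc e1 S1 (V (RRef n l) l1); l1 \<le> l;
             eval S1 \<theta> pc e2 S2 (V r l2); l2 \<le> l; n \<le> length (S2 l) \<rbrakk>
          \<Longrightarrow> eval S \<theta> pc (Write e1 e2) (S2(l := mem_upd (S2 l) n r)) (V RUnit pc)"
| ELabelOfRef: "eval S \<theta> pc e S1 (V (RRef n l) l')
          \<Longrightarrow> eval S \<theta> pc (LabelOfRef e) S1 (V (RLab l) (sup l l'))"

inductive val_eq :: "'l::lattice \<Rightarrow> 'l val \<Rightarrow> 'l val \<Rightarrow> bool"
  and raw_eq :: "'l::lattice \<Rightarrow> 'l raw \<Rightarrow> 'l raw \<Rightarrow> bool" for A where
  VLow: "\<lbrakk> l \<le> A; raw_eq A r1 r2 \<rbrakk> \<Longrightarrow> val_eq A (V r1 l) (V r2 l)"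
| VHigh: "\<lbrakk> \<not> l1 \<le> A; \<not> l2 \<le> A \<rbrakk> \<Longrightarrow> val_eq A (V r1 l1) (V r2 l2)"
| RUnitEq: "raw_eq A RUnit RUnit"
| RLabEq: "raw_eq A (RLab l) (RLab l)"
| RCloEq: "list_all2 (val_eq A) \<theta>1 \<theta>2 \<Longrightarrow> raw_eq A (RClo e \<theta>1) (RClo e \<theta>2)"
| RInlEq: "val_eq A v1 v2 \<Longrightarrow> raw_eq A (RInl v1) (RInl v2)"
| RInrEq: "val_eq A v1 v2 \<Longrightarrow> raw_eq A (RInr v1) (RInr v2)"
| RPairEq: "\<lbrakk> val_eq A v1 v1'; val_eq A v2 v2' \<rbrakk> \<Longrightarrow> raw_eq A (RPair v1 v2) (RPair v1' v2')"
| RRefLow: "l \<le> A \<Longrightarrow> raw_eq A (RRef n l) (RRef n l)"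
| RRefHigh: "\<lbrakk> \<not> l1 \<le> A; \<not> l2 \<le> A \<rbrakk> \<Longrightarrow> raw_eq A (RRef n1 l1) (RRef n2 l2)"

definition env_eq :: "'l::lattice \<Rightarrow> 'l env \<Rightarrow> 'l env \<Rightarrow> bool" where
  "env_eq A \<theta>1 \<theta>2 = list_all2 (val_eq A) \<theta>1 \<theta>2"

definition mem_eq :: "'l::lattice \<Rightarrow> 'l \<Rightarrow> 'l mem \<Rightarrow> 'l mem \<Rightarrow> bool" where
  "mem_eq A l M1 M2 = (\<not> l \<le> A \<or>
      (length M1 = length M2 \<and> (\<forall>n < length M1. raw_eq A (M1 ! n) (M2 ! n))))"

definition store_eq :: "'l::lattice \<Rightarrow> 'l store \<Rightarrow> 'l store \<Rightarrow> bool" where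
  "store_eq A S1 S2 = (\<forall>l. mem_eq A l (S1 l) (S2 l))"

definition init_cfg_eq :: "'l::lattice \<Rightarrow> 'l store \<times> 'l expr \<Rightarrow> 'l store \<times> 'l expr \<Rightarrow> bool" where
  "init_cfg_eq A c1 c2 = (store_eq A (fst c1) (fst c2) \<and> snd c1 = snd c2)"

definition final_cfg_eq :: "'l::lattice \<Rightarrow> 'l store \<times> 'l val \<Rightarrow> 'l store \<times> 'l val \<Rightarrow> bool" where
  "final_cfg_eq A c1 c2 = (store_eq A (fst c1) (fst c2) \<and> val_eq A (snd c1) (snd c2))"

definition evalc :: "'l::lattice store \<times> 'l expr \<Rightarrow> 'l env \<Rightarrow> 'l \<Rightarrow> 'l store \<times> 'l val \<Rightarrow> bool" where
  "evalc c \<theta> pc c' = eval (fst c) \<theta> pc (snd c) (fst c') (snd c')"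

end

theory Submission
  imports Defs
begin

fun vlab :: "'l val \<Rightarrow> 'l" where "vlab (V r l) = l"

lemma vlab_join[simp]: "vlab (join_val v l) = sup (vlab v) l"
  by (cases v) auto

lemma lab_ge: "eval S \<theta> pc e S' v \<Longrightarrow> pc \<le> vlab v"
  by (induction rule: eval.induct) (auto intro: le_supI1 le_supI2 order_trans)

lemma confine: "eval S \<theta> pc e S' v \<Longrightarrow> S' l \<noteq> S l \<Longrightarrow> pc \<le> l"
proof (induction rule: eval.induct)
  case (EApp S \<theta> pc e1 S1 e \<theta>' l' e2 S2 v2 S3 v)
  then show ?case by (metis le_supE)
next
  case (ETaint S \<theta> pc e1 S1 l0 l' e2 S2 v)
  then have "pc \<le> l'" using lab_ge by fastforce
  then show ?case using ETaint by (metis order_trans)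
next
  case (ENew S \<theta> pc e S1 r l0 n)
  then have "pc \<le> l0" using lab_ge by fastforce
  then show ?case using ENew by (cases "l = l0") auto
next
  case (EWrite S \<theta> pc e1 S1 n l0 l1 e2 S2 r l2)
  then have "pc \<le> l1" using lab_ge by fastforce
  then show ?case using EWrite by (cases "l = l0") (auto intro: order_trans, metis)
qed (auto, (metis)+)

lemma high:
  assumes "eval S1 \<theta>1 pc1 e1 S1' v1" "eval S2 \<theta>2 pc2 e2 S2' v2"
    "\<not> pc1 \<le> A" "\<not> pc2 \<le> A" "store_eq A S1 S2"
  shows "store_eq A S1' S2' \<and> val_eq A v1 v2"
proof
  have a: "S1' l = S1 l" "S2' l = S2 l" if "l \<le> A" for l
    using confine[OF assms(1), of l] confine[OF assms(2), of l] assms(3,4) that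
    by (auto intro: order_trans)
  show "store_eq A S1' S2'" using assms(5) a unfolding store_eq_def mem_eq_def by metis
  have "\<not> vlab v1 \<le> A" "\<not> vlab v2 \<le> A"
    using lab_ge[OF assms(1)] lab_ge[OF assms(2)] assms(3,4) by (auto intro: order_trans)
  then show "val_eq A v1 v2" by (cases v1; cases v2) (auto intro: val_eq_raw_eq.intros)
qed

lemma join_eq: "val_eq A v1 v2 \<Longrightarrow> val_eq A (join_val v1 l) (join_val v2 l)"
  by (induction rule: val_eq.cases) (auto intro: val_eq_raw_eq.intros)

lemma store_upd_high1: "store_eq A S1 S2 \<Longrightarrow> \<not> l \<le> A \<Longrightarrow> store_eq A (S1(l:=M)) S2"
  unfolding store_eq_def mem_eq_def by auto
lemma store_upd_high2: "store_eq A S1 S2 \<Longrightarrow> \<not> l \<le> A \<Longrightarrow> store_eq A S1 (S2(l:=M))"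
  unfolding store_eq_def mem_eq_def by auto

lemma store_upd_low: "store_eq A S1 S2 \<Longrightarrow> raw_eq A r1 r2 \<Longrightarrow>
   store_eq A (S1(l:=mem_upd (S1 l) n r1)) (S2(l:=mem_upd (S2 l) n r2))"
  unfolding store_eq_def mem_eq_def mem_upd_def
  apply (auto simp: nth_append nth_list_update)
  done

inductive_cases valE: "val_eq A (V r1 l1) (V r2 l2)"
inductive_cases rawCloE: "raw_eq A (RClo e t) r"
inductive_cases rawInlE: "raw_eq A (RInl v) r"
inductive_cases rawInrE: "raw_eq A (RInr v) r"
inductive_cases rawPairE: "raw_eq A (RPair v w) r"
inductive_cases rawLabE: "raw_eq A (RLab l) r"
inductive_cases rawRefE: "raw_eq A (RRef n l) r"
inductive_cases
  appE: "eval S \<theta> pc (App e1 e2) S' v" and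
  inlE: "eval S \<theta> pc (InlE e) S' v" and
  inrE: "eval S \<theta> pc (InrE e) S' v" and
  caseE: "eval S \<theta> pc (Case e e1 e2) S' v" and
  pairE: "eval S \<theta> pc (PairE e1 e2) S' v" and
  fstE: "eval S \<theta> pc (Fst e) S' v" and
  sndE: "eval S \<theta> pc (Snd e) S' v" and
  labofE: "eval S \<theta> pc (LabelOf e) S' v" and
  cmpE: "eval S \<theta> pc (Cmp e1 e2) S' v" and
  taintE: "eval S \<theta> pc (Taint e1 e2) S' v" and
  newE: "eval S \<theta> pc (New e) S' v" and
  readE: "eval S \<theta> pc (Read e) S' v" and
  writeE: "eval S \<theta> pc (Write e1 e2) S' v" and
  lorE: "eval S \<theta> pc (LabelOfRef e) S' v" and
  varE: "eval S \<theta> pc (Var x) S' v" and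
  unitE: "eval S \<theta> pc UnitE S' v" and
  labE: "eval S \<theta> pc (LabE l) S' v" and
  lamE: "eval S \<theta> pc (Lam e) S' v" and
  glE: "eval S \<theta> pc GetLabel S' v"

lemma low:
  "eval S1 \<theta>1 pc e S1' v1 \<Longrightarrow> eval S2 \<theta>2 pc e S2' v2 \<Longrightarrow> env_eq A \<theta>1 \<theta>2 \<Longrightarrow>
   store_eq A S1 S2 \<Longrightarrow> pc \<le> A \<Longrightarrow> store_eq A S1' S2' \<and> val_eq A v1 v2"
proof (induction arbitrary: S2 \<theta>2 S2' v2 rule: eval.induct)
  case (EVar x \<theta> S pc)
  then show ?case by (auto elim!: varE simp: env_eq_def list_all2_conv_all_nth intro!: join_eq)
next
  case (EUnit S \<theta> pc)
  then show ?case by (auto elim!: unitE intro: val_eq_raw_eq.intros)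
next
  case (ELab S \<theta> pc l)
  then show ?case by (auto elim!: labE intro: val_eq_raw_eq.intros)
next
  case (EFun S \<theta> pc e)
  then show ?case by (auto elim!: lamE intro!: VLow RCloEq simp: env_eq_def)
next
  case (EGetLabel S \<theta> pc)
  then show ?case by (auto elim!: glE intro: val_eq_raw_eq.intros)
next
  case (EApp S \<theta> pc e1 S1 e \<theta>' l e2 S2a v2a S3 v)
  from EApp.prems(1) show ?case
  proof (cases rule: appE[consumes 1])
    case (1 S21 eb \<theta>b lb S22 v22)
    from EApp.IH(1)[OF 1(1) EApp.prems(2,3,4)] have s1: "store_eq A S1 S21"
      and c: "val_eq A (V (RClo e \<theta>') l) (V (RClo eb \<theta>b) lb)" by auto
    from EApp.IH(2)[OF 1(2) EApp.prems(2) s1 EApp.prems(4)] have s2: "store_eq A S2a S22"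
      and a: "val_eq A v2a v22" by auto
    show ?thesis
    proof (cases "l \<le> A")
      case True
      with c have "lb = l" "eb = e" "list_all2 (val_eq A) \<theta>' \<theta>b"
        by (auto elim!: valE rawCloE)
      then show ?thesis using EApp.IH(3)[OF _ _ s2] 1(3) a True EApp.prems(4)
        by (auto simp: env_eq_def)
    next
      case False
      with c have "\<not> lb \<le> A" by (auto elim!: valE)
      then show ?thesis using high[OF EApp.hyps(3) 1(3) _ _ s2] False
        by (auto simp: le_sup_iff)
    qed
  qed
next
  case (EInl S \<theta> pc e S1 v)
  then show ?case by (auto elim!: inlE intro!: VLow RInlEq)
next
  case (EInr S \<theta> pc e S1 v)
  then show ?case by (auto elim!: inrE intro!: VLow RInrEq)
next
  case (ECaseL S \<theta> pc e S1 v1 l e1 S2a v e2)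
  from ECaseL.prems(1) show ?case
  proof (cases rule: caseE[consumes 1])
    case (1 S21 w lb)
    from ECaseL.IH(1)[OF 1(1) ECaseL.prems(2,3,4)] have s1: "store_eq A S1 S21"
      and c: "val_eq A (V (RInl v1) l) (V (RInl w) lb)" by auto
    show ?thesis
    proof (cases "l \<le> A")
      case True
      with c have "lb = l" "val_eq A v1 w" by (auto elim!: valE rawInlE)
      then show ?thesis using ECaseL.IH(2)[OF _ _ s1] 1(2) True ECaseL.prems(2,4)
        by (auto simp: env_eq_def)
    next
      case False
      with c have "\<not> lb \<le> A" by (auto elim!: valE)
      then show ?thesis using high[OF ECaseL.hyps(2) 1(2) _ _ s1] False
        by (auto simp: le_sup_iff)
    qed
  next
    case (2 S21 w lb)
    from ECaseL.IH(1)[OF 2(1) ECaseL.prems(2,3,4)] have s1: "store_eq A S1 S21"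
      and c: "val_eq A (V (RInl v1) l) (V (RInr w) lb)" by auto
    have "\<not> l \<le> A" "\<not> lb \<le> A" using c by (auto elim!: valE rawInlE)
    then show ?thesis using high[OF ECaseL.hyps(2) 2(2) _ _ s1]
      by (auto simp: le_sup_iff)
  qed
next
  case (ECaseR S \<theta> pc e S1 v1 l e2 S2a v e1)
  from ECaseR.prems(1) show ?case
  proof (cases rule: caseE[consumes 1])
    case (2 S21 w lb)
    from ECaseR.IH(1)[OF 2(1) ECaseR.prems(2,3,4)] have s1: "store_eq A S1 S21"
      and c: "val_eq A (V (RInr v1) l) (V (RInr w) lb)" by auto
    show ?thesis
    proof (cases "l \<le> A")
      case True
      with c have "lb = l" "val_eq A v1 w" by (auto elim!: valE rawInrE)
      then show ?thesis using ECaseR.IH(2)[OF _ _ s1] 2(2) True ECaseR.prems(2,4)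
        by (auto simp: env_eq_def)
    next
      case False
      with c have "\<not> lb \<le> A" by (auto elim!: valE)
      then show ?thesis using high[OF ECaseR.hyps(2) 2(2) _ _ s1] False
        by (auto simp: le_sup_iff)
    qed
  next
    case (1 S21 w lb)
    from ECaseR.IH(1)[OF 1(1) ECaseR.prems(2,3,4)] have s1: "store_eq A S1 S21"
      and c: "val_eq A (V (RInr v1) l) (V (RInl w) lb)" by auto
    have "\<not> l \<le> A" "\<not> lb \<le> A" using c by (auto elim!: valE rawInrE)
    then show ?thesis using high[OF ECaseR.hyps(2) 1(2) _ _ s1]
      by (auto simp: le_sup_iff)
  qed
next
  case (EPair S \<theta> pc e1 S1 v1 e2 S2a v2a)
  from EPair.prems(1) show ?case
  proof (cases rule: pairE[consumes 1])
    case (1 S21 w1 w2)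
    from EPair.IH(1)[OF 1(2) EPair.prems(2,3,4)] have s1: "store_eq A S1 S21"
      and "val_eq A v1 w1" by auto
    moreover from EPair.IH(2)[OF 1(3) EPair.prems(2) s1 EPair.prems(4)]
    have "store_eq A S2a S2'" "val_eq A v2a w2" by auto
    ultimately show ?thesis using 1 EPair.prems(4) by (auto intro!: VLow RPairEq)
  qed
next
  case (EFst S \<theta> pc e S1 v1 v2a l)
  from EFst.prems(1) show ?case
  proof (cases rule: fstE[consumes 1])
    case (1 w1 w2 lb)
    from EFst.IH[OF 1(2) EFst.prems(2,3,4)] have s1: "store_eq A S1 S2'"
      and c: "val_eq A (V (RPair v1 v2a) l) (V (RPair w1 w2) lb)" by auto
    show ?thesis
    proof (cases "l \<le> A")
      case True
      with c have "lb = l" "val_eq A v1 w1" by (auto elim!: valE rawPairE)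
      then show ?thesis using s1 1 by (auto intro: join_eq)
    next
      case False
      with c have "\<not> lb \<le> A" by (auto elim!: valE)
      then show ?thesis using s1 1 False
        by (cases v1; cases w1) (auto simp: le_sup_iff intro: VHigh)
    qed
  qed
next
  case (ESnd S \<theta> pc e S1 v1 v2a l)
  from ESnd.prems(1) show ?case
  proof (cases rule: sndE[consumes 1])
    case (1 w1 w2 lb)
    from ESnd.IH[OF 1(2) ESnd.prems(2,3,4)] have s1: "store_eq A S1 S2'"
      and c: "val_eq A (V (RPair v1 v2a) l) (V (RPair w1 w2) lb)" by auto
    show ?thesis
    proof (cases "l \<le> A")
      case True
      with c have "lb = l" "val_eq A v2a w2" by (auto elim!: valE rawPairE)
      then show ?thesis using s1 1 by (auto intro: join_eq)
    next
      case False
      with c have "\<not> lb \<le> A" by (auto elim!: valE)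
      then show ?thesis using s1 1 False
        by (cases v2a; cases w2) (auto simp: le_sup_iff intro: VHigh)
    qed
  qed
next
  case (ELabelOf S \<theta> pc e S1 r l)
  from ELabelOf.prems(1) show ?case
  proof (cases rule: labofE[consumes 1])
    case (1 rb lb)
    from ELabelOf.IH[OF 1(2) ELabelOf.prems(2,3,4)] 1 show ?thesis
      by (auto elim!: valE intro: VHigh VLow RLabEq)
  qed
next
  case (ECmpT S \<theta> pc e1 S1 l1 l1' e2 S2a l2 l2')
  from ECmpT.prems(1) show ?case
  proof (cases rule: cmpE[consumes 1])
    case (1 S21 m1 m1' m2 m2')
    from ECmpT.IH(1)[OF 1(2) ECmpT.prems(2,3,4)] have s1: "store_eq A S1 S21"
      and c1: "val_eq A (V (RLab l1) l1') (V (RLab m1) m1')" by auto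
    from ECmpT.IH(2)[OF 1(3) ECmpT.prems(2) s1 ECmpT.prems(4)] have s2: "store_eq A S2a S2'"
      and c2: "val_eq A (V (RLab l2) l2') (V (RLab m2) m2')" by auto
    show ?thesis using s2 c1 c2 1 ECmpT.prems(4) ECmpT.hyps
      by (auto elim!: valE rawLabE intro!: VLow RInlEq RUnitEq intro: VHigh simp: le_sup_iff)
  next
    case (2 S21 m1 m1' m2 m2')
    from ECmpT.IH(1)[OF 2(2) ECmpT.prems(2,3,4)] have s1: "store_eq A S1 S21"
      and c1: "val_eq A (V (RLab l1) l1') (V (RLab m1) m1')" by auto
    from ECmpT.IH(2)[OF 2(3) ECmpT.prems(2) s1 ECmpT.prems(4)] have s2: "store_eq A S2a S2'"
      and c2: "val_eq A (V (RLab l2) l2') (V (RLab m2) m2')" by auto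
    show ?thesis using s2 c1 c2 2 ECmpT.prems(4) ECmpT.hyps
      by (auto elim!: valE rawLabE intro: VHigh simp: le_sup_iff)
  qed
next
  case (ECmpF S \<theta> pc e1 S1 l1 l1' e2 S2a l2 l2')
  from ECmpF.prems(1) show ?case
  proof (cases rule: cmpE[consumes 1])
    case (2 S21 m1 m1' m2 m2')
    from ECmpF.IH(1)[OF 2(2) ECmpF.prems(2,3,4)] have s1: "store_eq A S1 S21"
      and c1: "val_eq A (V (RLab l1) l1') (V (RLab m1) m1')" by auto
    from ECmpF.IH(2)[OF 2(3) ECmpF.prems(2) s1 ECmpF.prems(4)] have s2: "store_eq A S2a S2'"
      and c2: "val_eq A (V (RLab l2) l2') (V (RLab m2) m2')" by auto
    show ?thesis using s2 c1 c2 2 ECmpF.prems(4) ECmpF.hyps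
      by (auto elim!: valE rawLabE intro!: VLow RInrEq RUnitEq intro: VHigh simp: le_sup_iff)
  next
    case (1 S21 m1 m1' m2 m2')
    from ECmpF.IH(1)[OF 1(2) ECmpF.prems(2,3,4)] have s1: "store_eq A S1 S21"
      and c1: "val_eq A (V (RLab l1) l1') (V (RLab m1) m1')" by auto
    from ECmpF.IH(2)[OF 1(3) ECmpF.prems(2) s1 ECmpF.prems(4)] have s2: "store_eq A S2a S2'"
      and c2: "val_eq A (V (RLab l2) l2') (V (RLab m2) m2')" by auto
    show ?thesis using s2 c1 c2 1 ECmpF.prems(4) ECmpF.hyps
      by (auto elim!: valE rawLabE intro: VHigh simp: le_sup_iff)
  qed
next
  case (ETaint S \<theta> pc e1 S1 l l' e2 S2a v)
  from ETaint.prems(1) show ?case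
  proof (cases rule: taintE[consumes 1])
    case (1 S21 lb lb')
    from ETaint.IH(1)[OF 1(1) ETaint.prems(2,3,4)] have s1: "store_eq A S1 S21"
      and c: "val_eq A (V (RLab l) l') (V (RLab lb) lb')" by auto
    show ?thesis
    proof (cases "l' \<le> A")
      case True
      with c have "lb = l" "lb' = l'" by (auto elim!: valE rawLabE)
      show ?thesis
      proof (cases "l \<le> A")
        case True
        then show ?thesis using ETaint.IH(2)[OF _ ETaint.prems(2) s1] 1 \<open>lb = l\<close> by auto
      next
        case False
        then show ?thesis using high[OF ETaint.hyps(3) 1(3) _ _ s1] \<open>lb = l\<close> by auto
      qed
    next
      case False
      with c have "\<not> lb' \<le> A" by (auto elim!: valE)
      then have "\<not> lb \<le> A" "\<not> l \<le> A" using False 1(2) ETaint.hyps(2)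
        by (auto intro: order_trans)
      then show ?thesis using high[OF ETaint.hyps(3) 1(3) _ _ s1] by auto
    qed
  qed
next
  case (ENew S \<theta> pc e S1 r l n)
  from ENew.prems(1) show ?case
  proof (cases rule: newE[consumes 1])
    case (1 S21 rb lb)
    from ENew.IH[OF 1(3) ENew.prems(2,3,4)] have s1: "store_eq A S1 S21"
      and c: "val_eq A (V r l) (V rb lb)" by auto
    show ?thesis
    proof (cases "l \<le> A")
      case True
      with c have "lb = l" "raw_eq A r rb" by (auto elim!: valE)
      moreover have "length (S1 l) = length (S21 l)"
        using s1 True unfolding store_eq_def mem_eq_def by auto
      moreover have "store_eq A (S1(l := mem_upd (S1 l) n r)) (S21(l := mem_upd (S21 l) n rb))"
        using s1 \<open>raw_eq A r rb\<close> by (rule store_upd_low)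
      moreover have "S2' = S21(l := mem_upd (S21 l) n rb)" "v2 = V (RRef n l) pc"
        using 1 ENew.hyps(2) \<open>lb = l\<close> calculation(3) by auto
      ultimately show ?thesis using ENew.prems(4) True
        by (simp only:) (auto intro!: VLow RRefLow)
    next
      case False
      with c have "\<not> lb \<le> A" by (auto elim!: valE)
      have st: "store_eq A (S1(l := mem_upd (S1 l) n r)) S2'"
        using store_upd_high2[OF store_upd_high1[OF s1 False] \<open>\<not> lb \<le> A\<close>] 1 by simp
      have "val_eq A (V (RRef n l) pc) v2"
        using 1 False ENew.prems(4) \<open>\<not> lb \<le> A\<close> by (auto intro!: VLow RRefHigh)
      with st show ?thesis by blast
    qed
  qed
next
  case (ERead S \<theta> pc e S1 n l l' r)
  from ERead.prems(1) show ?case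
  proof (cases rule: readE[consumes 1])
    case (1 nb lb lb')
    from ERead.IH[OF 1(2) ERead.prems(2,3,4)] have s1: "store_eq A S1 S2'"
      and c: "val_eq A (V (RRef n l) l') (V (RRef nb lb) lb')" by auto
    show ?thesis
    proof (cases "l \<le> A \<and> l' \<le> A")
      case True
      with c have "lb = l" "lb' = l'" "nb = n" by (auto elim!: valE rawRefE)
      moreover have "raw_eq A (S1 l ! n) (S2' l ! n)"
        using s1 True ERead.hyps(2) unfolding store_eq_def mem_eq_def by auto
      ultimately show ?thesis using 1 ERead.hyps(3) True s1
        by (auto intro!: VLow)
    next
      case False
      with c have "\<not> sup lb lb' \<le> A" "\<not> sup l l' \<le> A" by (auto elim!: valE rawRefE)
      then show ?thesis using 1 s1 ERead.hyps(3) by (auto intro: VHigh)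
    qed
  qed
next
  case (EWrite S \<theta> pc e1 S1 n l l1 e2 S2a r l2)
  from EWrite.prems(1) show ?case
  proof (cases rule: writeE[consumes 1])
    case (1 S21 nb lb lb1 S22 rb lb2)
    from EWrite.IH(1)[OF 1(3) EWrite.prems(2,3,4)] have s1: "store_eq A S1 S21"
      and c: "val_eq A (V (RRef n l) l1) (V (RRef nb lb) lb1)" by auto
    from EWrite.IH(2)[OF 1(5) EWrite.prems(2) s1 EWrite.prems(4)] have s2: "store_eq A S2a S22"
      and c2: "val_eq A (V r l2) (V rb lb2)" by (auto simp: 1)
    show ?thesis
    proof (cases "l \<le> A \<and> l1 \<le> A")
      case True
      with c have "lb = l" "lb1 = l1" "nb = n" by (auto elim!: valE rawRefE)
      moreover have "raw_eq A r rb" "lb2 = l2" using c2 EWrite.hyps(4) True \<open>lb = l\<close> 1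
        by (auto elim!: valE intro: order_trans)
      ultimately have "store_eq A (S2a(l := mem_upd (S2a l) n r)) S2'"
        using 1 store_upd_low[OF s2] by simp
      moreover have "val_eq A (V RUnit pc) v2" using 1 EWrite.prems(4) by (auto intro!: VLow RUnitEq)
      ultimately show ?thesis by blast
    next
      case False
      with c have "\<not> lb \<le> A" "\<not> l \<le> A" using EWrite.hyps(2) 1(4)
        by (auto elim!: valE rawRefE intro: order_trans)
      then have "store_eq A (S2a(l := mem_upd (S2a l) n r)) S2'"
        using 1 store_upd_high2[OF store_upd_high1[OF s2]] by simp
      moreover have "val_eq A (V RUnit pc) v2" using 1 EWrite.prems(4) by (auto intro!: VLow RUnitEq)
      ultimately show ?thesis by blast
    qed
  qed
next
  case (ELabelOfRef S \<theta> pc e S1 n l l')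
  from ELabelOfRef.prems(1) show ?case
  proof (cases rule: lorE[consumes 1])
    case (1 nb lb lb')
    from ELabelOfRef.IH[OF 1(2) ELabelOfRef.prems(2,3,4)] have s1: "store_eq A S1 S2'"
      and c: "val_eq A (V (RRef n l) l') (V (RRef nb lb) lb')" by auto
    show ?thesis
    proof (cases "l \<le> A \<and> l' \<le> A")
      case True
      with c have "lb = l" "lb' = l'" by (auto elim!: valE rawRefE)
      then show ?thesis using 1 True s1 by (auto intro!: VLow RLabEq)
    next
      case False
      with c have "\<not> sup lb lb' \<le> A" "\<not> sup l l' \<le> A" by (auto elim!: valE rawRefE)
      then show ?thesis using 1 s1 by (auto intro: VHigh)
    qed
  qed
qed

theorem mainTheorem1:
  fixes A pc :: "'l::lattice"
    and c1 c2 :: "'l store \<times> 'l expr"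
    and \<theta>1 \<theta>2 :: "'l env"
    and c1' c2' :: "'l store \<times> 'l val"
  assumes "evalc c1 \<theta>1 pc c1'"
    and "evalc c2 \<theta>2 pc c2'"
    and "env_eq A \<theta>1 \<theta>2"
    and "init_cfg_eq A c1 c2"
  shows "final_cfg_eq A c1' c2'"
proof -
  have e1: "eval (fst c1) \<theta>1 pc (snd c1) (fst c1') (snd c1')"
    and e2: "eval (fst c2) \<theta>2 pc (snd c1) (fst c2') (snd c2')"
    and s: "store_eq A (fst c1) (fst c2)"
    using assms unfolding evalc_def init_cfg_eq_def by auto
  show ?thesis
  proof (cases "pc \<le> A")
    case True
    then show ?thesis using low[OF e1 e2 assms(3) s] unfolding final_cfg_eq_def by auto
  next
    case False
    then show ?thesis using high[OF e1 e2 False False s] unfolding final_cfg_eq_def by auto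
  qed
qed

end
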